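(* If $T\in\mathcal{T}_3$ has $n$ vertices then $\mu(T)<\frac{3n-2}{4}$.
   Context: A leaf is a vertex of degree at most 1; an internal vertex has degree at least 2. $\mathcal{T}_3$ is the set of finite trees with at least one internal vertex in which every internal vertex has degree at least 3. A subtree of $T$ is a nonempty vertex set inducing a connected subgraph; $\mu(T)$ is the average number of vertices over all subtrees of $T$. *)

theory Defs
  imports Main Complex_Main
begin

definition simple_graph :: "'a set \<Rightarrow> ('a \<Rightarrow> 'a \<Rightarrow> bool) \<Rightarrow> bool" where
  "simple_graph V E \<longleftrightarrow> finite V \<and> (\<forall>u v. E u v \<longrightarrow> u \<in> V \<and> v \<in> V \<and> u \<noteq> v \<and> E v u)"

definition edges :: "'a set \<Rightarrow> ('a \<Rightarrow> 'a \<Rightarrow> bool) \<Rightarrow> 'a set set" where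
  "edges V E = {{u, v} | u v. u \<in> V \<and> v \<in> V \<and> E u v}"

definition degree :: "'a set \<Rightarrow> ('a \<Rightarrow> 'a \<Rightarrow> bool) \<Rightarrow> 'a \<Rightarrow> nat" where
  "degree V E v = card {u \<in> V. E v u}"

definition induces_connected :: "('a \<Rightarrow> 'a \<Rightarrow> bool) \<Rightarrow> 'a set \<Rightarrow> bool" where
  "induces_connected E S \<longleftrightarrow> S \<noteq> {} \<and>
     (\<forall>x\<in>S. \<forall>y\<in>S. (x, y) \<in> {(u, v). u \<in> S \<and> v \<in> S \<and> E u v}\<^sup>*)"

definition is_tree :: "'a set \<Rightarrow> ('a \<Rightarrow> 'a \<Rightarrow> bool) \<Rightarrow> bool" where
  "is_tree V E \<longleftrightarrow> simple_graph V E \<and> induces_connected E V \<and> card (edges V E) + 1 = card V"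

definition in_T3 :: "'a set \<Rightarrow> ('a \<Rightarrow> 'a \<Rightarrow> bool) \<Rightarrow> bool" where
  "in_T3 V E \<longleftrightarrow> is_tree V E \<and> (\<exists>v\<in>V. degree V E v \<ge> 2) \<and>
     (\<forall>v\<in>V. degree V E v \<ge> 2 \<longrightarrow> degree V E v \<ge> 3)"

definition subtrees :: "'a set \<Rightarrow> ('a \<Rightarrow> 'a \<Rightarrow> bool) \<Rightarrow> 'a set set" where
  "subtrees V E = {S. S \<subseteq> V \<and> induces_connected E S}"

definition mu :: "'a set \<Rightarrow> ('a \<Rightarrow> 'a \<Rightarrow> bool) \<Rightarrow> real" where
  "mu V E = (\<Sum>S\<in>subtrees V E. real (card S)) / real (card (subtrees V E))"

end

theory Submission imports Defs begin

locale t3 =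
  fixes V :: "'a set" and E :: "'a \<Rightarrow> 'a \<Rightarrow> bool"
  assumes T3: "in_T3 V E"
begin

definition R :: "'a set \<Rightarrow> ('a \<times> 'a) set" where
  "R S = {(u, v). u \<in> S \<and> v \<in> S \<and> E u v}"

definition Lf where "Lf = {v\<in>V. degree V E v \<le> 1}"
definition In where "In = {v\<in>V. 2 \<le> degree V E v}"

lemma finV: "finite V"
  using T3 unfolding in_T3_def is_tree_def simple_graph_def by blast

lemma Eprops: assumes "E u v" shows "u \<in> V" "v \<in> V" "u \<noteq> v" "E v u"
  using T3 assms unfolding in_T3_def is_tree_def simple_graph_def by blast+

lemma conn: "x \<in> V \<Longrightarrow> y \<in> V \<Longrightarrow> (x, y) \<in> (R V)\<^sup>*"
  using T3 unfolding in_T3_def is_tree_def induces_connected_def R_def by blast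

lemma ex_int: "\<exists>w\<in>V. 2 \<le> degree V E w"
  using T3 unfolding in_T3_def by blast

lemma int3: "v \<in> V \<Longrightarrow> 2 \<le> degree V E v \<Longrightarrow> 3 \<le> degree V E v"
  using T3 unfolding in_T3_def by blast

lemma card_edges: "card (edges V E) + 1 = card V"
  using T3 unfolding in_T3_def is_tree_def by blast

lemma fin_nbr: "finite {u\<in>V. E v u}"
  using finV by simp

lemma first_step:
  assumes "(x, y) \<in> (R S)\<^sup>*" "x \<noteq> y"
  shows "\<exists>z\<in>S. E x z \<and> x \<in> S"
  using assms by (cases rule: converse_rtranclE) (auto simp: R_def)

lemma leaf_nbr_unique:
  assumes "v \<in> Lf" "E v a" "E v b" shows "a = b"
proof -
  have "card {u\<in>V. E v u} \<le> Suc 0" using assms(1) unfolding Lf_def degree_def by simp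
  then have "\<forall>x\<in>{u\<in>V. E v u}. \<forall>y\<in>{u\<in>V. E v u}. x = y"
    using card_le_Suc0_iff_eq[OF fin_nbr] by blast
  moreover have "a \<in> {u\<in>V. E v u}" "b \<in> {u\<in>V. E v u}" using assms Eprops by auto
  ultimately show ?thesis by blast
qed

lemma leaf_indep:
  assumes "E u v" "u \<in> Lf" "v \<in> Lf" shows False
proof -
  obtain w where w: "w \<in> V" "2 \<le> degree V E w" using ex_int by blast
  have uV: "u \<in> V" using Eprops assms by auto
  have "(u, w) \<in> (R V)\<^sup>*" using conn uV w by blast
  then have "w \<in> {u, v}"
  proof (induction rule: rtrancl_induct)
    case base then show ?case by simp
  next
    case (step y z)
    then have Eyz: "E y z" by (auto simp: R_def)
    show ?case
    proof (cases "y = u")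
      case True
      then show ?thesis using leaf_nbr_unique[OF assms(2) assms(1)] Eyz by auto
    next
      case False
      then have "y = v" using step by auto
      then show ?thesis using leaf_nbr_unique[OF assms(3) Eprops(4)[OF assms(1)]] Eyz by auto
    qed
  qed
  then show False using w assms unfolding Lf_def by auto
qed

lemma deg_pos: assumes "v \<in> V" shows "1 \<le> degree V E v"
proof -
  obtain w where w: "w \<in> V" "2 \<le> degree V E w" using ex_int by blast
  show ?thesis
  proof (cases "v = w")
    case True then show ?thesis using w by simp
  next
    case False
    then obtain z where "z \<in> V" "E v z" using first_step[OF conn[OF assms w(1)]] by blast
    then have "{u\<in>V. E v u} \<noteq> {}" by blast
    then show ?thesis unfolding degree_def using fin_nbr
      by (simp add: Suc_le_eq card_gt_0_iff)
  qed
qed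

lemma V_split: "V = In \<union> Lf" "In \<inter> Lf = {}"
  unfolding In_def Lf_def by auto

lemma handshake: "(\<Sum>v\<in>V. degree V E v) = 2 * card (edges V E)"
proof -
  define D where "D = Sigma V (\<lambda>v. {u\<in>V. E v u})"
  have finD: "finite D" unfolding D_def using finV by auto
  have finE: "finite (edges V E)"
  proof -
    have "edges V E \<subseteq> Pow V" unfolding edges_def by auto
    then show ?thesis using finV finite_subset by blast
  qed
  have 1: "(\<Sum>v\<in>V. degree V E v) = card D"
    unfolding D_def degree_def using finV by simp
  define g where "g = (\<lambda>(u::'a, v::'a). {u, v})"
  have gD: "g ` D \<subseteq> edges V E" unfolding g_def D_def edges_def by auto
  have "card D = (\<Sum>x\<in>D. 1::nat)" by simp
  also have "\<dots> = (\<Sum>e\<in>edges V E. \<Sum>x\<in>{x. x \<in> D \<and> g x = e}. 1)"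
    using sum.group[OF finD finE gD, of "\<lambda>_. 1::nat"] by simp
  also have "\<dots> = (\<Sum>e\<in>edges V E. 2)"
  proof (rule sum.cong)
    fix e assume "e \<in> edges V E"
    then obtain u v where uv: "e = {u, v}" "u \<in> V" "v \<in> V" "E u v" unfolding edges_def by blast
    have "{x. x \<in> D \<and> g x = e} = {(u, v), (v, u)}"
      unfolding D_def g_def uv using uv Eprops[OF uv(4)] by (auto simp: doubleton_eq_iff)
    moreover have "u \<noteq> v" using Eprops[OF uv(4)] by simp
    ultimately show "(\<Sum>x\<in>{x. x \<in> D \<and> g x = e}. 1::nat) = 2" by simp
  qed simp
  finally show ?thesis using 1 by simp
qed

lemma leaves_count: "card In + 2 \<le> card Lf"
proof -
  have fI: "finite In" and fL: "finite Lf" using finV unfolding In_def Lf_def by auto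
  have "(\<Sum>v\<in>V. degree V E v) = (\<Sum>v\<in>In. degree V E v) + (\<Sum>v\<in>Lf. degree V E v)"
    using sum.union_disjoint[OF fI fL V_split(2), of "degree V E"] V_split(1) by simp
  moreover have "(\<Sum>v\<in>In. degree V E v) \<ge> (\<Sum>v\<in>In. 3)"
    by (rule sum_mono) (use int3 In_def in auto)
  moreover have "(\<Sum>v\<in>Lf. degree V E v) \<ge> (\<Sum>v\<in>Lf. 1)"
    by (rule sum_mono) (use deg_pos Lf_def in auto)
  moreover have "card V = card In + card Lf"
    using card_Un_disjoint[OF fI fL V_split(2)] V_split(1) by simp
  ultimately show ?thesis using handshake card_edges by simp
qed


lemma sub_props:
  assumes "S \<in> subtrees V E"
  shows "S \<subseteq> V" "S \<noteq> {}" "\<And>x y. x \<in> S \<Longrightarrow> y \<in> S \<Longrightarrow> (x, y) \<in> (R S)\<^sup>*"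
  using assms unfolding subtrees_def induces_connected_def R_def by blast+

lemma fin_sub: "finite (subtrees V E)"
proof -
  have "subtrees V E \<subseteq> Pow V" unfolding subtrees_def by auto
  then show ?thesis using finV finite_subset by blast
qed

lemma sub_leaf_adj:
  assumes S: "S \<in> subtrees V E" and x: "x \<in> S" "x \<in> Lf" and y: "y \<in> S" "y \<in> In"
  shows "\<exists>z\<in>S \<inter> In. E z x"
proof -
  have "x \<noteq> y" using x y V_split by auto
  then obtain z where z: "z \<in> S" "E x z" using first_step[OF sub_props(3)[OF S x(1) y(1)]] by blast
  have "z \<in> V" using Eprops z by auto
  moreover have "z \<notin> Lf" using leaf_indep z x by blast
  ultimately have "z \<in> In" using V_split by auto
  then show ?thesis using z Eprops(4)[OF z(2)] by blast
qed

lemma int_walk: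
  assumes S: "S \<in> subtrees V E" and x: "x \<in> S" "x \<in> In" and p: "(x, y) \<in> (R S)\<^sup>*"
  shows "(y \<in> In \<and> (x, y) \<in> (R (S \<inter> In))\<^sup>*) \<or>
         (y \<in> Lf \<and> (\<exists>z. z \<in> S \<inter> In \<and> (x, z) \<in> (R (S \<inter> In))\<^sup>* \<and> E z y))"
  using p
proof (induction rule: rtrancl_induct)
  case base then show ?case using x by simp
next
  case (step y y')
  then have E: "E y y'" and yS: "y \<in> S" and y'S: "y' \<in> S" by (auto simp: R_def)
  have y'V: "y' \<in> V" using Eprops E by auto
  show ?case
  proof (cases "y \<in> In")
    case True
    then have IH: "(x, y) \<in> (R (S \<inter> In))\<^sup>*" using step.IH V_split by auto
    show ?thesis
    proof (cases "y' \<in> In")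
      case True
      then have "(y, y') \<in> R (S \<inter> In)" using \<open>y \<in> In\<close> yS y'S E by (auto simp: R_def)
      then show ?thesis using IH True by (meson rtrancl.rtrancl_into_rtrancl)
    next
      case False
      then show ?thesis using IH \<open>y \<in> In\<close> yS E y'V V_split by blast
    qed
  next
    case False
    then have yL: "y \<in> Lf" and "\<exists>z. z \<in> S \<inter> In \<and> (x, z) \<in> (R (S \<inter> In))\<^sup>* \<and> E z y"
      using step.IH by auto
    then obtain z where z: "z \<in> S \<inter> In" "(x, z) \<in> (R (S \<inter> In))\<^sup>*" "E z y" by blast
    have "z = y'" using leaf_nbr_unique[OF yL Eprops(4)[OF z(3)] E] .
    moreover have "y' \<notin> Lf" using leaf_indep[OF E yL] by blast
    ultimately show ?thesis using z by auto
  qed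
qed

lemma int_conn:
  assumes S: "S \<in> subtrees V E" and ne: "S \<inter> In \<noteq> {}"
  shows "induces_connected E (S \<inter> In)"
proof -
  have "\<forall>x\<in>S \<inter> In. \<forall>y\<in>S \<inter> In. (x, y) \<in> (R (S \<inter> In))\<^sup>*"
  proof (intro ballI)
    fix x y assume x: "x \<in> S \<inter> In" and y: "y \<in> S \<inter> In"
    have "(x, y) \<in> (R S)\<^sup>*" using sub_props(3)[OF S] x y by blast
    then show "(x, y) \<in> (R (S \<inter> In))\<^sup>*" using int_walk[OF S] x y V_split by blast
  qed
  then show ?thesis using ne unfolding induces_connected_def R_def by blast
qed

lemma R_mono: "A \<subseteq> B \<Longrightarrow> R A \<subseteq> R B"
  unfolding R_def by auto

lemma conn_extend:
  assumes A: "induces_connected E A" and AB: "A \<subseteq> B"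
    and h: "\<And>b. b \<in> B \<Longrightarrow> \<exists>a\<in>A. (a, b) \<in> (R B)\<^sup>* \<and> (b, a) \<in> (R B)\<^sup>*"
  shows "induces_connected E B"
proof -
  have "\<forall>x\<in>B. \<forall>y\<in>B. (x, y) \<in> (R B)\<^sup>*"
  proof (intro ballI)
    fix x y assume "x \<in> B" "y \<in> B"
    then obtain a a' where a: "a \<in> A" "(x, a) \<in> (R B)\<^sup>*" and a': "a' \<in> A" "(a', y) \<in> (R B)\<^sup>*"
      using h by blast
    have "(a, a') \<in> (R A)\<^sup>*" using A a a' unfolding induces_connected_def R_def by blast
    then have "(a, a') \<in> (R B)\<^sup>*" using rtrancl_mono[OF R_mono[OF AB]] by blast
    then show "(x, y) \<in> (R B)\<^sup>*" using a a' by (meson rtrancl_trans)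
  qed
  moreover have "B \<noteq> {}" using A AB unfolding induces_connected_def by blast
  ultimately show ?thesis unfolding induces_connected_def R_def by blast
qed

definition psi :: "'a set \<Rightarrow> 'a set" where
  "psi S = (S \<inter> In) \<union> ((Lf - S) \<inter> {x. \<exists>z\<in>S \<inter> In. E z x})"

definition X where "X = {S \<in> subtrees V E. S \<inter> In \<noteq> {}}"

lemma psi_X: assumes S: "S \<in> X" shows "psi S \<in> X"
proof -
  have S': "S \<in> subtrees V E" "S \<inter> In \<noteq> {}" using S unfolding X_def by auto
  have sub: "psi S \<subseteq> V" unfolding psi_def using sub_props(1)[OF S'(1)] V_split by auto
  have pI: "psi S \<inter> In = S \<inter> In" unfolding psi_def using V_split by auto
  have "induces_connected E (psi S)"
  proof (rule conn_extend[OF int_conn[OF S'], of "psi S"])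
    show "S \<inter> In \<subseteq> psi S" unfolding psi_def by auto
  next
    fix b assume b: "b \<in> psi S"
    show "\<exists>a\<in>S \<inter> In. (a, b) \<in> (R (psi S))\<^sup>* \<and> (b, a) \<in> (R (psi S))\<^sup>*"
    proof (cases "b \<in> S \<inter> In")
      case True then show ?thesis by blast
    next
      case False
      then obtain z where z: "z \<in> S \<inter> In" "E z b" using b unfolding psi_def by blast
      have zp: "z \<in> psi S" using z unfolding psi_def by auto
      have "(z, b) \<in> R (psi S)" "(b, z) \<in> R (psi S)" using z zp b Eprops(4)[OF z(2)]
        unfolding R_def by auto
      then show ?thesis using z by blast
    qed
  qed
  then show ?thesis unfolding X_def subtrees_def using sub pI S'(2) by auto
qed

lemma psi_psi: assumes S: "S \<in> X" shows "psi (psi S) = S"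
proof -
  have S': "S \<in> subtrees V E" "S \<inter> In \<noteq> {}" using S unfolding X_def by auto
  have pI: "psi S \<inter> In = S \<inter> In" unfolding psi_def using V_split by auto
  have adj: "\<And>x. x \<in> S \<Longrightarrow> x \<in> Lf \<Longrightarrow> \<exists>z\<in>S \<inter> In. E z x"
    using sub_leaf_adj[OF S'(1)] S'(2) by blast
  have SV: "S \<subseteq> V" using sub_props(1)[OF S'(1)] .
  show ?thesis
    unfolding psi_def[of "psi S"] pI
    unfolding psi_def using adj SV V_split by blast
qed

lemma psi_leaves: "card (S \<inter> Lf) + card (psi S \<inter> Lf) \<le> card Lf"
proof -
  have fL: "finite Lf" using finV unfolding Lf_def by auto
  have "psi S \<inter> Lf \<subseteq> Lf - S" unfolding psi_def using V_split by auto
  then have "(S \<inter> Lf) \<union> (psi S \<inter> Lf) \<subseteq> Lf" "(S \<inter> Lf) \<inter> (psi S \<inter> Lf) = {}" by auto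
  moreover have "finite (S \<inter> Lf)" "finite (psi S \<inter> Lf)" using fL by auto
  ultimately show ?thesis using card_mono[OF fL] card_Un_disjoint by metis
qed

lemma Y_card: assumes S: "S \<in> subtrees V E" "S \<inter> In = {}" shows "card S = 1"
proof -
  have SV: "S \<subseteq> V" and ne: "S \<noteq> {}" using sub_props[OF S(1)] by auto
  have SL: "S \<subseteq> Lf" using SV S(2) V_split by auto
  have "\<forall>x\<in>S. \<forall>y\<in>S. x = y"
  proof (intro ballI, rule ccontr)
    fix x y assume xy: "x \<in> S" "y \<in> S" "x \<noteq> y"
    then obtain z where "z \<in> S" "E x z" using first_step[OF sub_props(3)[OF S(1)]] by blast
    then show False using leaf_indep SL xy by blast
  qed
  then obtain x where "S = {x}" using ne by blast
  then show ?thesis by simp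
qed


lemma main: "mu V E < (3 * real (card V) - 2) / 4"
proof -
  define Y where "Y = {S \<in> subtrees V E. S \<inter> In = {}}"
  define k where "k = card In"
  define l where "l = card Lf"
  have fI: "finite In" and fL: "finite Lf" using finV unfolding In_def Lf_def by auto
  have n: "card V = k + l" unfolding k_def l_def
    using card_Un_disjoint[OF fI fL V_split(2)] V_split(1) by simp
  have kl: "k + 2 \<le> l" using leaves_count k_def l_def by simp
  have k1: "1 \<le> k"
  proof -
    obtain w where "w \<in> In" using ex_int unfolding In_def by blast
    then have "In \<noteq> {}" by blast
    then show ?thesis unfolding k_def using fI by (simp add: Suc_le_eq card_gt_0_iff)
  qed
  have fX: "finite X" and fY: "finite Y" using fin_sub unfolding X_def Y_def by auto
  have XY: "subtrees V E = X \<union> Y" "X \<inter> Y = {}" unfolding X_def Y_def by auto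
  obtain v where v: "v \<in> Lf" 
  proof -
    have "Lf \<noteq> {}" using kl unfolding l_def by auto
    then show ?thesis using that by blast
  qed
  have "{v} \<in> Y" using v V_split unfolding Y_def subtrees_def induces_connected_def Lf_def by auto
  then have Y1: "1 \<le> card Y" using fY by (simp add: Suc_le_eq card_gt_0_iff) blast
  have sumY: "(\<Sum>S\<in>Y. card S) = card Y" using Y_card unfolding Y_def by simp
  have split: "\<And>S. S \<in> X \<Longrightarrow> card S = card (S \<inter> In) + card (S \<inter> Lf)"
  proof -
    fix S assume "S \<in> X"
    then have SV: "S \<subseteq> V" using sub_props(1) unfolding X_def by auto
    have "S = (S \<inter> In) \<union> (S \<inter> Lf)" using SV V_split by auto
    moreover have "finite (S \<inter> In)" "finite (S \<inter> Lf)" using fI fL by auto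
    ultimately show "card S = card (S \<inter> In) + card (S \<inter> Lf)"
      using card_Un_disjoint[of "S \<inter> In" "S \<inter> Lf"] V_split(2) by auto
  qed
  have sI: "(\<Sum>S\<in>X. card (S \<inter> In)) \<le> (\<Sum>S\<in>X. k)"
    by (rule sum_mono) (simp add: k_def card_mono fI)
  have bij: "bij_betw psi X X"
    by (rule bij_betw_byWitness[where f'=psi]) (auto simp: psi_psi psi_X)
  have re: "(\<Sum>S\<in>X. card (psi S \<inter> Lf)) = (\<Sum>S\<in>X. card (S \<inter> Lf))"
    using sum.reindex_bij_betw[OF bij, of "\<lambda>S. card (S \<inter> Lf)"] .
  have "(\<Sum>S\<in>X. card (S \<inter> Lf)) + (\<Sum>S\<in>X. card (psi S \<inter> Lf)) \<le> (\<Sum>S\<in>X. l)"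
    unfolding sum.distrib[symmetric] by (rule sum_mono) (simp add: l_def psi_leaves)
  then have sL: "2 * (\<Sum>S\<in>X. card (S \<inter> Lf)) \<le> l * card X" using re by (simp add: mult.commute mult_2)
  have sumX: "(\<Sum>S\<in>X. card S) = (\<Sum>S\<in>X. card (S \<inter> In)) + (\<Sum>S\<in>X. card (S \<inter> Lf))"
    using split by (simp add: sum.distrib)
  have X4: "4 * (\<Sum>S\<in>X. card S) + 2 * card X \<le> 3 * card V * card X"
  proof -
    have "4 * (\<Sum>S\<in>X. card S) \<le> 4 * k * card X + 2 * l * card X"
    proof -
      have a: "4 * (\<Sum>S\<in>X. card (S \<inter> In)) \<le> 4 * k * card X" using sI by (simp add: mult.commute)
      have b: "4 * (\<Sum>S\<in>X. card (S \<inter> Lf)) \<le> 2 * l * card X" using sL by simp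
      show ?thesis using a b sumX by linarith
    qed
    moreover have "4 * k * card X + 2 * l * card X + 2 * card X \<le> 3 * card V * card X"
    proof -
      have "4 * k + 2 * l + 2 \<le> 3 * card V" using n kl by simp
      then have "(4 * k + 2 * l + 2) * card X \<le> 3 * card V * card X" by (rule mult_right_mono) simp
      then show ?thesis by (simp add: algebra_simps)
    qed
    ultimately show ?thesis by simp
  qed
  have tot: "(\<Sum>S\<in>subtrees V E. card S) = (\<Sum>S\<in>X. card S) + card Y"
    using XY sum.union_disjoint[OF fX fY XY(2), of card] sumY by simp
  have N: "card (subtrees V E) = card X + card Y" using XY card_Un_disjoint[OF fX fY XY(2)] by simp
  have nge: "4 \<le> card V" using n kl k1 by simp
  define c where "c = (3 * real (card V) - 2) / 4"
  have rX: "4 * real (\<Sum>S\<in>X. card S) + 2 * real (card X) \<le> 3 * real (card V) * real (card X)"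
    
  proof -
    have "real (4 * (\<Sum>S\<in>X. card S) + 2 * card X) \<le> real (3 * card V * card X)"
      using X4 by (simp only: of_nat_le_iff)
    then show ?thesis by simp
  qed
  have rY: "4 * real (card Y) < (3 * real (card V) - 2) * real (card Y)"
  proof -
    have "(4::real) < 3 * real (card V) - 2" using nge by simp
    moreover have "real (card Y) > 0" using Y1 by simp
    ultimately show ?thesis by simp
  qed
  have num: "(\<Sum>S\<in>subtrees V E. real (card S)) = real (\<Sum>S\<in>X. card S) + real (card Y)"
    using tot by (simp flip: of_nat_sum)
  have Npos: "real (card (subtrees V E)) > 0" using N Y1 by simp
  have "(\<Sum>S\<in>subtrees V E. real (card S)) < c * real (card (subtrees V E))"
    unfolding num N c_def using rX rY by (simp add: algebra_simps)
  then show ?thesis unfolding mu_def c_def using Npos by (simp add: pos_divide_less_eq)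
qed

end

theorem mainTheorem3:
  fixes V :: "'a set" and E :: "'a \<Rightarrow> 'a \<Rightarrow> bool" and n :: nat
  assumes "in_T3 V E"
    and "card V = n"
  shows "mu V E < (3 * real n - 2) / 4"
proof -
  interpret t3 V E using assms(1) by unfold_locales
  show ?thesis using main assms(2) by simp
qed

end
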